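(* Assume $\mathbf 1\in\Sigma^\circ$. Let $\mathbf t\in\mathcal V$ and $c^*\in\mathbb R$ be such that $\mathbf t-c^*\mathbf 1$ lies on the boundary of $\Sigma$, let $c<c^*$, and let $\mathbf y$ denote the gradient certificate of $\mathbf t-c\mathbf 1$. Then there exists a constant $C>0$, depending only on the operator $\Lambda$ (and not on $\mathbf t$ or $c$), such that \[ c^*-c\ \le\ \left(C\,\|\mathbf 1\|^*_{\mathbf y}\right)^{-1}. \]
   Context: Fix nonzero real polynomials $g_1,\dots,g_m$ in $n$ variables and nonnegative integers $d_1,\dots,d_m$. Let $\mathcal V$ be the real vector space of polynomials $\sum_{i=1}^m g_i r_i$ with $\deg r_i\le 2d_i$, and $\Sigma\subseteq\mathcal V$ the cone of weighted sums of squares $\sum_i g_i\sigma_i$ with each $\sigma_i$ a sum of squares of polynomials of degree at most $d_i$; assume $\Sigma$ is a proper cone. Fix a basis $\mathbf q=(q_1,\dots,q_U)$ of $\mathcal V$, identify $\mathcal V$ and its dual with $\mathbb R^U$ with the standard inner product and Euclidean norm $\|\cdot\|$; $\Sigma^*$ is the dual cone, $K^\circ$ the interior of $K$; $\mathbf 1$ is the coefficient vector of the constant polynomial $1$. For each $i$ fix a basis $\mathbf p_i$ (of size $L_i$) of polynomials of degree at most $d_i$ and let $\Lambda_i:\mathbb R^U\to\mathbb S^{L_i}$ be the unique linear map with $\sum_u q_u\Lambda_i(\mathbf e_u)=g_i\mathbf p_i\mathbf p_i^T$; $\Lambda=\Lambda_1\oplus\cdots\oplus\Lambda_m$ (block diagonal),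 $\Lambda^*$ its adjoint; $(\Sigma^* )^\circ=\{\mathbf x:\Lambda(\mathbf x)\succ0\}$. On $(\Sigma^* )^\circ$ let $f(\mathbf x)=-\ln\det\Lambda(\mathbf x)$, with gradient $g(\mathbf x)=-\Lambda^*(\Lambda(\mathbf x)^{-1})$ and Hessian $H(\mathbf x)\mathbf w=\Lambda^*(\Lambda(\mathbf x)^{-1}\Lambda(\mathbf w)\Lambda(\mathbf x)^{-1})$. Dual local norm $\|\mathbf s\|^*_{\mathbf x}=\|H(\mathbf x)^{-1/2}\mathbf s\|$. For $\mathbf s\in\Sigma^\circ$, the gradient certificate of $\mathbf s$ is the unique $\mathbf y\in(\Sigma^* )^\circ$ with $-g(\mathbf y)=\mathbf s$. *)

theory Defs
  imports "HOL-Analysis.Analysis" "HOL-Library.Poly_Mapping"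
begin

text \<open>Real polynomials in the variables x_0, x_1, ...: finitely supported maps from
monomials (exponent vectors, nat =>0 nat) to real coefficients.\<close>
type_synonym rpoly = "(nat \<Rightarrow>\<^sub>0 nat) \<Rightarrow>\<^sub>0 real"

definition pconst :: "real \<Rightarrow> rpoly" where
  "pconst c = Poly_Mapping.single 0 c"

definition mon_deg :: "(nat \<Rightarrow>\<^sub>0 nat) \<Rightarrow> nat" where
  "mon_deg \<alpha> = (\<Sum>j\<in>Poly_Mapping.keys \<alpha>. Poly_Mapping.lookup \<alpha> j)"

text \<open>total degree (degree of the zero polynomial is taken to be 0)\<close>
definition tdeg :: "rpoly \<Rightarrow> nat" where
  "tdeg f = (if f = 0 then 0 else Max (mon_deg ` Poly_Mapping.keys f))"

definition in_vars :: "nat \<Rightarrow> rpoly \<Rightarrow> bool" where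
  "in_vars n f \<longleftrightarrow> (\<forall>\<alpha>\<in>Poly_Mapping.keys f. Poly_Mapping.keys \<alpha> \<subseteq> {..<n})"

definition polys_le :: "nat \<Rightarrow> nat \<Rightarrow> rpoly set" where
  "polys_le n k = {f. in_vars n f \<and> tdeg f \<le> k}"

definition sos_le :: "nat \<Rightarrow> nat \<Rightarrow> rpoly set" where
  "sos_le n k = {\<sigma>. \<exists>hs. set hs \<subseteq> polys_le n k \<and> \<sigma> = sum_list (map (\<lambda>h. h * h) hs)}"

definition Vspace :: "nat \<Rightarrow> nat \<Rightarrow> (nat \<Rightarrow> rpoly) \<Rightarrow> (nat \<Rightarrow> nat) \<Rightarrow> rpoly set" where
  "Vspace n m g d = {f. \<exists>r. (\<forall>i<m. r i \<in> polys_le n (2 * d i)) \<and> f = (\<Sum>i<m. g i * r i)}"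

definition WSOS :: "nat \<Rightarrow> nat \<Rightarrow> (nat \<Rightarrow> rpoly) \<Rightarrow> (nat \<Rightarrow> nat) \<Rightarrow> rpoly set" where
  "WSOS n m g d = {f. \<exists>\<sigma>. (\<forall>i<m. \<sigma> i \<in> sos_le n (d i)) \<and> f = (\<Sum>i<m. g i * \<sigma> i)}"

definition of_coeffs :: "('u::finite \<Rightarrow> rpoly) \<Rightarrow> real^'u \<Rightarrow> rpoly" where
  "of_coeffs q x = (\<Sum>u\<in>UNIV. pconst (x $ u) * q u)"

text \<open>Sigma identified with a subset of R^U via the basis q\<close>
definition Sigma_vec :: "nat \<Rightarrow> nat \<Rightarrow> (nat \<Rightarrow> rpoly) \<Rightarrow> (nat \<Rightarrow> nat) \<Rightarrow> ('u::finite \<Rightarrow> rpoly)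
    \<Rightarrow> (real^'u) set" where
  "Sigma_vec n m g d q = {x. of_coeffs q x \<in> WSOS n m g d}"

definition dual_cone :: "(real^'u::finite) set \<Rightarrow> (real^'u) set" where
  "dual_cone K = {y. \<forall>x\<in>K. 0 \<le> y \<bullet> x}"

definition proper_cone :: "(real^'u::finite) set \<Rightarrow> bool" where
  "proper_cone K \<longleftrightarrow> convex K \<and> cone K \<and> closed K \<and> interior K \<noteq> {} \<and> K \<inter> uminus ` K = {0}"

text \<open>Lambda is represented by its values A u = Lambda(e_u), a block-diagonal matrix indexed
by 'l, where index a belongs to block blk a.  Lambda(x) = sum_u x_u A_u.\<close>
definition Lam :: "('u::finite \<Rightarrow> real^'l::finite^'l) \<Rightarrow> real^'u \<Rightarrow> real^'l^'l" where
  "Lam A x = (\<Sum>u\<in>UNIV. x $ u *\<^sub>R A u)"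

text \<open>adjoint w.r.t. the trace inner product\<close>
definition Lam_adj :: "('u::finite \<Rightarrow> real^'l::finite^'l) \<Rightarrow> real^'l^'l \<Rightarrow> real^'u" where
  "Lam_adj A S = (\<chi> u. \<Sum>a\<in>UNIV. \<Sum>b\<in>UNIV. A u $ a $ b * S $ a $ b)"

text \<open>barrier f(x) = - ln det Lambda(x), gradient and Hessian (as given in the paper)\<close>
definition barrier :: "('u::finite \<Rightarrow> real^'l::finite^'l) \<Rightarrow> real^'u \<Rightarrow> real" where
  "barrier A x = - ln (det (Lam A x))"

definition grad :: "('u::finite \<Rightarrow> real^'l::finite^'l) \<Rightarrow> real^'u \<Rightarrow> real^'u" where
  "grad A x = - Lam_adj A (matrix_inv (Lam A x))"

definition hess_apply :: "('u::finite \<Rightarrow> real^'l::finite^'l) \<Rightarrow> real^'u \<Rightarrow> real^'u \<Rightarrow> real^'u" where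
  "hess_apply A x w = Lam_adj A (matrix_inv (Lam A x) ** Lam A w ** matrix_inv (Lam A x))"

definition hess :: "('u::finite \<Rightarrow> real^'l::finite^'l) \<Rightarrow> real^'u \<Rightarrow> real^'u^'u" where
  "hess A x = (\<chi> u v. hess_apply A x (axis v 1) $ u)"

definition dual_norm :: "('u::finite \<Rightarrow> real^'l::finite^'l) \<Rightarrow> real^'u \<Rightarrow> real^'u \<Rightarrow> real" where
  "dual_norm A x s = sqrt (s \<bullet> (matrix_inv (hess A x) *v s))"

end

theory Submission
  imports Defs
begin


lemma pconst_add: "pconst (a + b) = pconst a + pconst b"
  by (simp add: pconst_def single_add)
lemma pconst_mult: "pconst (a * b) = pconst a * pconst b"
  by (simp add: pconst_def mult_single)
lemma pconst_0[simp]: "pconst 0 = 0"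
  by (simp add: pconst_def)
lemma pconst_1[simp]: "pconst 1 = 1"
  unfolding pconst_def by transfer (auto simp: fun_eq_iff when_def)
lemma pconst_uminus: "pconst (- a) = - pconst a"
  by (simp add: pconst_def single_uminus)
lemma pconst_diff: "pconst (a - b) = pconst a - pconst b"
  by (simp add: pconst_def single_diff)
lemma pconst_sum: "pconst (\<Sum>i\<in>S. f i) = (\<Sum>i\<in>S. pconst (f i))"
  by (induction S rule: infinite_finite_induct) (simp_all add: pconst_add)

lemma keys_pconst_mult: "Poly_Mapping.keys (pconst a * f) \<subseteq> Poly_Mapping.keys f"
proof
  fix k assume "k \<in> Poly_Mapping.keys (pconst a * f)"
  then show "k \<in> Poly_Mapping.keys f"
    unfolding pconst_def mult_map_scale_conv_mult[symmetric]
    by (auto simp: in_keys_iff map.rep_eq when_def)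
qed

lemma tdeg_le_iff: "tdeg f \<le> k \<longleftrightarrow> (\<forall>\<alpha>\<in>Poly_Mapping.keys f. mon_deg \<alpha> \<le> k)"
proof (cases "f = 0")
  case True then show ?thesis by (simp add: tdeg_def)
next
  case False
  then have "Poly_Mapping.keys f \<noteq> {}" by simp
  then show ?thesis using False by (simp add: tdeg_def)
qed

lemma polys_le_iff: "f \<in> polys_le n k \<longleftrightarrow> (\<forall>\<alpha>\<in>Poly_Mapping.keys f. Poly_Mapping.keys \<alpha> \<subseteq> {..<n} \<and> mon_deg \<alpha> \<le> k)"
  by (auto simp: polys_le_def in_vars_def tdeg_le_iff)

lemma polys_le_0[simp]: "0 \<in> polys_le n k"
  by (simp add: polys_le_iff)
lemma polys_le_add: "f \<in> polys_le n k \<Longrightarrow> h \<in> polys_le n k \<Longrightarrow> f + h \<in> polys_le n k"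
  using keys_add[of f h] unfolding polys_le_iff by blast
lemma polys_le_scale: "f \<in> polys_le n k \<Longrightarrow> pconst a * f \<in> polys_le n k"
  using keys_pconst_mult[of a f] unfolding polys_le_iff by blast
lemma polys_le_sum: "(\<And>i. i \<in> S \<Longrightarrow> f i \<in> polys_le n k) \<Longrightarrow> (\<Sum>i\<in>S. f i) \<in> polys_le n k"
  by (induction S rule: infinite_finite_induct) (auto simp: polys_le_add)

lemma Vspace_0: "0 \<in> Vspace n m g d"
  unfolding Vspace_def by (rule CollectI, rule exI[of _ "\<lambda>i. 0"]) simp
lemma Vspace_add: "f \<in> Vspace n m g d \<Longrightarrow> h \<in> Vspace n m g d \<Longrightarrow> f + h \<in> Vspace n m g d"
  unfolding Vspace_def
proof (clarify)
  fix r r' assume r: "\<forall>i<m. r i \<in> polys_le n (2 * d i)" and r': "\<forall>i<m. r' i \<in> polys_le n (2 * d i)"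
  show "\<exists>ra. (\<forall>i<m. ra i \<in> polys_le n (2 * d i)) \<and>
          (\<Sum>i<m. g i * r i) + (\<Sum>i<m. g i * r' i) = (\<Sum>i<m. g i * ra i)"
    by (rule exI[of _ "\<lambda>i. r i + r' i"]) (simp add: r r' polys_le_add distrib_left sum.distrib)
qed
lemma Vspace_scale: "f \<in> Vspace n m g d \<Longrightarrow> pconst a * f \<in> Vspace n m g d"
  unfolding Vspace_def
proof (clarify)
  fix r assume r: "\<forall>i<m. r i \<in> polys_le n (2 * d i)"
  show "\<exists>ra. (\<forall>i<m. ra i \<in> polys_le n (2 * d i)) \<and>
          pconst a * (\<Sum>i<m. g i * r i) = (\<Sum>i<m. g i * ra i)"
    by (rule exI[of _ "\<lambda>i. pconst a * r i"]) (simp add: r polys_le_scale sum_distrib_left mult.left_commute)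
qed
lemma Vspace_sum: "(\<And>i. i \<in> S \<Longrightarrow> f i \<in> Vspace n m g d) \<Longrightarrow> (\<Sum>i\<in>S. f i) \<in> Vspace n m g d"
  by (induction S rule: infinite_finite_induct) (auto simp: Vspace_add Vspace_0)

lemma of_coeffs_add: "of_coeffs q (x + z) = of_coeffs q x + of_coeffs q z"
  by (simp add: of_coeffs_def pconst_add distrib_right sum.distrib)
lemma of_coeffs_diff: "of_coeffs q (x - z) = of_coeffs q x - of_coeffs q z"
  by (simp add: of_coeffs_def pconst_diff left_diff_distrib sum_subtractf)
lemma of_coeffs_scale: "of_coeffs q (a *\<^sub>R x) = pconst a * of_coeffs q x"
  by (simp add: of_coeffs_def pconst_mult sum_distrib_left mult.assoc)
lemma of_coeffs_0[simp]: "of_coeffs q 0 = 0"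
  by (simp add: of_coeffs_def)
lemma of_coeffs_sum: "of_coeffs q (\<Sum>i\<in>S. x i) = (\<Sum>i\<in>S. of_coeffs q (x i))"
  by (induction S rule: infinite_finite_induct) (auto simp: of_coeffs_add)
lemma of_coeffs_sum_list: "of_coeffs q (sum_list xs) = sum_list (map (of_coeffs q) xs)"
  by (induction xs) (auto simp: of_coeffs_add)

lemma of_coeffs_in_V: "\<forall>u. q u \<in> Vspace n m g d \<Longrightarrow> of_coeffs q x \<in> Vspace n m g d"
  unfolding of_coeffs_def by (intro Vspace_sum Vspace_scale) auto

lemma of_coeffs_inj:
  assumes "\<forall>u. q u \<in> Vspace n m g d" "\<forall>f\<in>Vspace n m g d. \<exists>!x. of_coeffs q x = f"
    and "of_coeffs q x = of_coeffs q z"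
  shows "x = z"
  using assms of_coeffs_in_V[OF assms(1), of x] by metis


definition outer :: "real^'n::finite \<Rightarrow> real^'n \<Rightarrow> real^'n^'n" where
  "outer u v = (\<chi> a b. u$a * v$b)"

lemma inner_outer: "(X::real^'n::finite^'n) \<bullet> outer u v = u \<bullet> (X *v v)"
  by (simp add: inner_vec_def outer_def matrix_vector_mult_def sum_distrib_left mult_ac)

lemma Lam_comp: "Lam A x $ a $ b = (\<Sum>u\<in>UNIV. x$u * A u $ a $ b)"
  by (simp add: Lam_def sum_component)

lemma Lam_adj_inner: "Lam_adj A S \<bullet> w = Lam A w \<bullet> S"
proof -
  have "Lam_adj A S \<bullet> w = (\<Sum>u\<in>UNIV. \<Sum>a\<in>UNIV. \<Sum>b\<in>UNIV. w$u * A u $ a $ b * S $ a $ b)"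
    by (simp add: inner_vec_def Lam_adj_def sum_distrib_left sum_distrib_right mult_ac)
  also have "\<dots> = (\<Sum>a\<in>UNIV. \<Sum>u\<in>UNIV. \<Sum>b\<in>UNIV. w$u * A u $ a $ b * S $ a $ b)"
    by (rule sum.swap)
  also have "\<dots> = (\<Sum>a\<in>UNIV. \<Sum>b\<in>UNIV. \<Sum>u\<in>UNIV. w$u * A u $ a $ b * S $ a $ b)"
    by (rule sum.cong[OF refl], rule sum.swap)
  also have "\<dots> = Lam A w \<bullet> S"
    by (simp add: inner_vec_def Lam_comp sum_distrib_left sum_distrib_right mult_ac)
  finally show ?thesis .
qed

lemma swap3: "(\<Sum>a\<in>A. \<Sum>b\<in>B. \<Sum>k\<in>K. f a b k) = (\<Sum>k\<in>K. \<Sum>b\<in>B. \<Sum>a\<in>A. f a b k)"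
proof -
  have "(\<Sum>a\<in>A. \<Sum>b\<in>B. \<Sum>k\<in>K. f a b k) = (\<Sum>a\<in>A. \<Sum>k\<in>K. \<Sum>b\<in>B. f a b k)"
    by (rule sum.cong[OF refl], rule sum.swap)
  also have "\<dots> = (\<Sum>k\<in>K. \<Sum>a\<in>A. \<Sum>b\<in>B. f a b k)" by (rule sum.swap)
  also have "\<dots> = (\<Sum>k\<in>K. \<Sum>b\<in>B. \<Sum>a\<in>A. f a b k)"
    by (rule sum.cong[OF refl], rule sum.swap)
  finally show ?thesis .
qed

lemma mat_inner_mul1: "(X::real^'n::finite^'n) \<bullet> (B ** C) = (transpose B ** X) \<bullet> C"
proof -
  have "X \<bullet> (B ** C) = (\<Sum>a\<in>UNIV. \<Sum>b\<in>UNIV. \<Sum>k\<in>UNIV. X$a$b * B$a$k * C$k$b)"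
    by (simp add: inner_vec_def matrix_matrix_mult_def sum_distrib_left mult_ac)
  also have "\<dots> = (\<Sum>k\<in>UNIV. \<Sum>b\<in>UNIV. \<Sum>a\<in>UNIV. X$a$b * B$a$k * C$k$b)" by (rule swap3)
  also have "\<dots> = (transpose B ** X) \<bullet> C"
    by (simp add: inner_vec_def matrix_matrix_mult_def transpose_def sum_distrib_left sum_distrib_right mult_ac)
  finally show ?thesis .
qed

lemma mat_inner_mul2: "(X::real^'n::finite^'n) \<bullet> (B ** C) = (X ** transpose C) \<bullet> B"
proof -
  have "X \<bullet> (B ** C) = (\<Sum>a\<in>UNIV. \<Sum>b\<in>UNIV. \<Sum>k\<in>UNIV. X$a$b * B$a$k * C$k$b)"
    by (simp add: inner_vec_def matrix_matrix_mult_def sum_distrib_left mult_ac)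
  also have "\<dots> = (\<Sum>a\<in>UNIV. \<Sum>k\<in>UNIV. \<Sum>b\<in>UNIV. X$a$b * B$a$k * C$k$b)"
    by (rule sum.cong[OF refl], rule sum.swap)
  also have "\<dots> = (X ** transpose C) \<bullet> B"
    by (simp add: inner_vec_def matrix_matrix_mult_def transpose_def sum_distrib_left sum_distrib_right mult_ac)
  finally show ?thesis .
qed

lemma inner_transpose_mv: "(x::real^'n::finite) \<bullet> (transpose R *v y) = (R *v x) \<bullet> y"
proof -
  have "x \<bullet> (transpose R *v y) = (\<Sum>a\<in>UNIV. \<Sum>b\<in>UNIV. x$a * R$b$a * y$b)"
    by (simp add: inner_vec_def matrix_vector_mult_def transpose_def sum_distrib_left mult_ac)
  also have "\<dots> = (\<Sum>b\<in>UNIV. \<Sum>a\<in>UNIV. x$a * R$b$a * y$b)" by (rule sum.swap)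
  also have "\<dots> = (R *v x) \<bullet> y"
    by (simp add: inner_vec_def matrix_vector_mult_def sum_distrib_left sum_distrib_right mult_ac)
  finally show ?thesis .
qed

lemma matrix_inv_props:
  assumes "invertible (A::real^'n::finite^'n)"
  shows "A ** matrix_inv A = mat 1" "matrix_inv A ** A = mat 1"
proof -
  from assms obtain B where "A ** B = mat 1 \<and> B ** A = mat 1" unfolding invertible_def by blast
  then have "A ** matrix_inv A = mat 1 \<and> matrix_inv A ** A = mat 1"
    unfolding matrix_inv_def by (rule someI)
  then show "A ** matrix_inv A = mat 1" "matrix_inv A ** A = mat 1" by auto
qed

lemma matrix_inv_unique:
  assumes "(A::real^'n::finite^'n) ** B = mat 1" "B ** A = mat 1"
  shows "matrix_inv A = B"
proof -
  have inv: "invertible A" using assms unfolding invertible_def by blast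
  have "matrix_inv A = matrix_inv A ** (A ** B)" by (simp add: assms)
  also have "\<dots> = (matrix_inv A ** A) ** B" by (simp add: matrix_mul_assoc)
  also have "\<dots> = B" by (simp add: matrix_inv_props[OF inv])
  finally show ?thesis .
qed

lemma norm_outer: "norm (outer (v::real^'n::finite) v) = v \<bullet> v"
proof -
  have "outer v v \<bullet> outer v v = (v \<bullet> v) * (v \<bullet> v)"
    by (simp add: inner_vec_def outer_def sum_distrib_left sum_distrib_right mult_ac)
  then show ?thesis by (simp add: norm_eq_sqrt_inner real_sqrt_mult)
qed

lemma inner_sym_trace:
  assumes "transpose M = (M::real^'n::finite^'n)"
  shows "M \<bullet> B = (\<Sum>b\<in>UNIV. (M ** B)$b$b)"
proof -
  have sym: "M$a$b = M$b$a" for a b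
    using arg_cong[OF assms, of "\<lambda>X. X$a$b"] by (simp add: transpose_def)
  have "M \<bullet> B = (\<Sum>a\<in>UNIV. \<Sum>b\<in>UNIV. M$b$a * B$a$b)"
    unfolding inner_vec_def by (simp add: sym)
  also have "\<dots> = (\<Sum>b\<in>UNIV. \<Sum>a\<in>UNIV. M$b$a * B$a$b)" by (rule sum.swap)
  also have "\<dots> = (\<Sum>b\<in>UNIV. (M ** B)$b$b)" by (simp add: matrix_matrix_mult_def)
  finally show ?thesis .
qed


lemma Lam_adj_add: "Lam_adj A (S + S') = Lam_adj A S + Lam_adj A S'"
  by (simp add: vec_eq_iff Lam_adj_def distrib_left sum.distrib)
lemma Lam_adj_scale: "Lam_adj A (r *\<^sub>R S) = r *\<^sub>R Lam_adj A S"
  by (simp add: vec_eq_iff Lam_adj_def sum_distrib_left mult_ac)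
lemma matrix_add_rdistrib': "((B::real^'n::finite^'n) + C) ** D = B ** D + C ** D"
  by (simp add: vec_eq_iff matrix_matrix_mult_def distrib_right sum.distrib)
lemma Lam_axis: "Lam A (axis v 1) = A v"
proof -
  have "Lam A (axis v 1) = (\<Sum>u\<in>UNIV. (if u = v then A u else 0))"
    unfolding Lam_def by (rule sum.cong) (auto simp: axis_def)
  then show ?thesis by simp
qed
lemma Lam_sum_axis: "Lam A w = (\<Sum>v\<in>UNIV. w$v *\<^sub>R A v)"
  by (simp add: Lam_def)

lemma mat_scale_mid: "(B::real^'n::finite^'n) ** (r *\<^sub>R N) ** B = r *\<^sub>R (B ** N ** B)"
  by (simp add: matrix_scalar_ac scalar_matrix_assoc)

lemma T_linear:
  fixes B :: "real^'l::finite^'l" and A :: "'u::finite \<Rightarrow> real^'l^'l"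
  shows "linear (\<lambda>N. Lam_adj A (B ** N ** B))"
proof (rule linearI)
  fix N N' :: "real^'l^'l"
  show "Lam_adj A (B ** (N + N') ** B) = Lam_adj A (B ** N ** B) + Lam_adj A (B ** N' ** B)"
    by (simp add: matrix_add_ldistrib matrix_add_rdistrib' Lam_adj_add)
next
  fix r and N :: "real^'l^'l"
  show "Lam_adj A (B ** (r *\<^sub>R N) ** B) = r *\<^sub>R Lam_adj A (B ** N ** B)"
    by (simp only: mat_scale_mid Lam_adj_scale)
qed


lemma mv_axis[simp]: "((M::real^'n::finite^'n) *v axis k 1) $ a = M$a$k"
  by (simp add: matrix_vector_mult_basis column_def)

lemma gram_aux:
  fixes I :: "'n::finite set"
  assumes fin: "finite I"
  shows "\<forall>M::real^'n^'n. (\<forall>a b. M$a$b = M$b$a) \<longrightarrow>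
     (\<forall>c. (\<forall>j. j \<notin> I \<longrightarrow> c$j = 0) \<longrightarrow> 0 \<le> c \<bullet> (M *v c)) \<longrightarrow>
     (\<exists>r::'n \<Rightarrow> (real^'n). (\<forall>a\<in>I. \<forall>j. j \<notin> I \<longrightarrow> r a $ j = 0) \<and> (\<forall>a\<in>I. \<forall>b\<in>I. M$a$b = r a \<bullet> r b))"
using fin proof (induction I rule: finite_induct)
  case empty
  then show ?case by auto
next
  case (insert k I)
  show ?case
  proof (intro allI impI)
    fix M :: "real^'n^'n"
    assume sym: "\<forall>a b. M$a$b = M$b$a"
      and psd: "\<forall>c. (\<forall>j. j \<notin> insert k I \<longrightarrow> c$j = 0) \<longrightarrow> 0 \<le> c \<bullet> (M *v c)"
    have qf2: "(t *\<^sub>R axis k 1 + axis j 1) \<bullet> (M *v (t *\<^sub>R axis k 1 + axis j 1))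
        = t*t*M$k$k + 2*t*M$k$j + M$j$j" for t j
      using sym by (simp add: matrix_vector_right_distrib inner_add_left inner_add_right
            inner_axis' algebra_simps)
    have Mkk: "0 \<le> M$k$k"
    proof -
      have "0 \<le> axis k 1 \<bullet> (M *v axis k 1)" by (rule psd[rule_format]) (simp add: axis_def)
      then show ?thesis by (simp add: inner_axis')
    qed
    show "\<exists>r::'n \<Rightarrow> (real^'n). (\<forall>a\<in>insert k I. \<forall>j. j \<notin> insert k I \<longrightarrow> r a $ j = 0) \<and>
             (\<forall>a\<in>insert k I. \<forall>b\<in>insert k I. M$a$b = r a \<bullet> r b)"
    proof (cases "M$k$k = 0")
      case True
      have Mkj: "M$k$j = 0" if "j \<in> I" for j
      proof (rule ccontr)
        assume ne: "M$k$j \<noteq> 0"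
        define t where "t = - (M$j$j + 1) / (2 * M$k$j)"
        have "0 \<le> (t *\<^sub>R axis k 1 + axis j 1) \<bullet> (M *v (t *\<^sub>R axis k 1 + axis j 1))"
          using that by (intro psd[rule_format]) (auto simp: axis_def)
        also have "\<dots> = -1" unfolding qf2 t_def using True ne by (simp add: field_simps)
        finally show False by simp
      qed
      have I_psd: "\<forall>c. (\<forall>j. j \<notin> I \<longrightarrow> c$j = 0) \<longrightarrow> 0 \<le> c \<bullet> (M *v c)"
        using psd by auto
      obtain r :: "'n \<Rightarrow> real^'n" where r1: "\<forall>a\<in>I. \<forall>j. j \<notin> I \<longrightarrow> r a $ j = 0"
        and r2: "\<forall>a\<in>I. \<forall>b\<in>I. M$a$b = r a \<bullet> r b"
        using "insert.IH" sym I_psd by blast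
      show ?thesis
      proof (rule exI[where x="r(k := 0)"], intro conjI ballI allI impI)
        fix a j assume "a \<in> insert k I" "j \<notin> insert k I"
        then show "(r(k := 0)) a $ j = 0" using r1 by auto
      next
        fix a b assume a: "a \<in> insert k I" and b: "b \<in> insert k I"
        show "M$a$b = (r(k := 0)) a \<bullet> (r(k := 0)) b"
          using a b r2 Mkj True sym "insert.hyps" by (auto simp: fun_upd_def)
      qed
    next
      case False
      with Mkk have pos: "M$k$k > 0" by simp
      define M' :: "real^'n^'n" where "M' = (\<chi> a b. M$a$b - M$a$k * M$k$b / M$k$k)"
      have M'c: "M'$a$b = M$a$b - M$a$k * M$k$b / M$k$k" for a b by (simp add: M'_def)
      have sym': "\<forall>a b. M'$a$b = M'$b$a" using sym by (simp add: M'c mult.commute)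
      have psd': "\<forall>c. (\<forall>j. j \<notin> I \<longrightarrow> c$j = 0) \<longrightarrow> 0 \<le> c \<bullet> (M' *v c)"
      proof (intro allI impI)
        fix c :: "real^'n" assume c: "\<forall>j. j \<notin> I \<longrightarrow> c$j = 0"
        define \<beta> where "\<beta> = (M *v c)$k"
        define c' where "c' = c - (\<beta> / M$k$k) *\<^sub>R axis k 1"
        have "0 \<le> c' \<bullet> (M *v c')"
          using c by (intro psd[rule_format]) (auto simp: c'_def axis_def)
        also have "c' \<bullet> (M *v c') = c \<bullet> (M *v c) - (\<beta> / M$k$k) * (c \<bullet> (M *v axis k 1))
             - (\<beta> / M$k$k) * \<beta> + (\<beta> / M$k$k) * (\<beta> / M$k$k) * M$k$k"
          by (simp add: c'_def matrix_vector_right_distrib matrix_vector_mult_diff_distrib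
              inner_diff_left inner_diff_right inner_axis' \<beta>_def algebra_simps)
        also have "c \<bullet> (M *v axis k 1) = \<beta>"
          unfolding \<beta>_def inner_vec_def mv_axis by (simp add: matrix_vector_mult_def mult.commute sym)
        also have "c \<bullet> (M *v c) - (\<beta> / M$k$k) * \<beta> - (\<beta> / M$k$k) * \<beta> + (\<beta> / M$k$k) * (\<beta> / M$k$k) * M$k$k
             = c \<bullet> (M *v c) - \<beta> * \<beta> / M$k$k"
          using pos by (simp add: field_simps power2_eq_square)
        also have "c \<bullet> (M *v c) - \<beta> * \<beta> / M$k$k = c \<bullet> (M' *v c)"
        proof -
          have "c \<bullet> (M' *v c) = (\<Sum>a\<in>UNIV. \<Sum>b\<in>UNIV. c$a * M$a$b * c$b)
                 - (\<Sum>a\<in>UNIV. \<Sum>b\<in>UNIV. c$a * M$a$k * M$k$b * c$b) / M$k$k"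
            by (simp add: inner_vec_def matrix_vector_mult_def M'c algebra_simps sum_distrib_left
                 sum_subtractf sum_divide_distrib)
          also have "(\<Sum>a\<in>UNIV. \<Sum>b\<in>UNIV. c$a * M$a$k * M$k$b * c$b) = \<beta> * \<beta>"
            unfolding \<beta>_def by (simp add: matrix_vector_mult_def sum_product sym mult_ac)
          also have "(\<Sum>a\<in>UNIV. \<Sum>b\<in>UNIV. c$a * M$a$b * c$b) = c \<bullet> (M *v c)"
            by (simp add: inner_vec_def matrix_vector_mult_def sum_distrib_left mult_ac)
          finally show ?thesis by simp
        qed
        finally show "0 \<le> c \<bullet> (M' *v c)" .
      qed
      obtain r :: "'n \<Rightarrow> real^'n" where r1: "\<forall>a\<in>I. \<forall>j. j \<notin> I \<longrightarrow> r a $ j = 0"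
        and r2: "\<forall>a\<in>I. \<forall>b\<in>I. M'$a$b = r a \<bullet> r b"
        using "insert.IH" sym' psd' by blast
      define s where "s = sqrt (M$k$k)"
      have s: "s > 0" "s * s = M$k$k" using pos by (auto simp: s_def)
      define r' where "r' = (\<lambda>a. if a = k then s *\<^sub>R axis k 1 else r a + (M$a$k / s) *\<^sub>R axis k 1)"
      have rk: "r a $ k = 0" if "a \<in> I" for a using r1 that "insert.hyps" by auto
      show ?thesis
      proof (rule exI[where x=r'], intro conjI ballI allI impI)
        fix a j assume "a \<in> insert k I" "j \<notin> insert k I"
        then show "r' a $ j = 0" using r1 by (auto simp: r'_def axis_def)
      next
        fix a b assume a: "a \<in> insert k I" and b: "b \<in> insert k I"
        show "M$a$b = r' a \<bullet> r' b"
        proof (cases "a = k")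
          case ak: True
          show ?thesis
          proof (cases "b = k")
            case True then show ?thesis using ak s by (simp add: r'_def inner_axis')
          next
            case False
            then have "b \<in> I" using b by auto
            then show ?thesis using ak False s rk sym
              by (simp add: r'_def inner_axis' inner_add_right inner_axis field_simps)
          qed
        next
          case ak: False
          then have aI: "a \<in> I" using a by auto
          show ?thesis
          proof (cases "b = k")
            case True then show ?thesis using ak aI s rk sym
              by (simp add: r'_def inner_axis' inner_add_left inner_axis field_simps)
          next
            case False
            then have bI: "b \<in> I" using b by auto
            have "r' a \<bullet> r' b = r a \<bullet> r b + M$a$k * M$b$k / (s * s)"
              using ak False aI bI rk s
              by (simp add: r'_def inner_add_left inner_add_right inner_axis inner_axis' field_simps)
            also have "\<dots> = M$a$b" using r2[rule_format, OF aI bI] s M'c[of a b] sym[rule_format, of k b] by simp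
            finally show ?thesis by simp
          qed
        qed
      qed
    qed
  qed
qed

lemma gram:
  fixes M :: "real^'n::finite^'n"
  assumes sym: "\<forall>a b. M$a$b = M$b$a" and psd: "\<forall>c. 0 \<le> c \<bullet> (M *v c)"
  shows "\<exists>R::real^'n^'n. transpose R ** R = M"
proof -
  note H = gram_aux[of "UNIV::'n set", OF finite_class.finite_UNIV, simplified]
  from H sym psd
  obtain r :: "'n \<Rightarrow> real^'n" where r: "\<forall>a b. M$a$b = r a \<bullet> r b"
    by blast
  define R :: "real^'n^'n" where "R = (\<chi> j a. r a $ j)"
  have "transpose R ** R = M"
    by (simp add: R_def vec_eq_iff matrix_matrix_mult_def transpose_def r inner_vec_def)
  then show ?thesis by blast
qed


locale wsetup =
  fixes n m :: nat and g :: "nat \<Rightarrow> rpoly" and d :: "nat \<Rightarrow> nat"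
    and q :: "'u::finite \<Rightarrow> rpoly"
    and blk :: "'l::finite \<Rightarrow> nat" and p :: "'l \<Rightarrow> rpoly"
    and A :: "'u \<Rightarrow> real^'l^'l"
    and one :: "real^'u"
  assumes g_nz: "\<forall>i<m. g i \<noteq> 0 \<and> in_vars n (g i)"
    and q_in: "\<forall>u. q u \<in> Vspace n m g d"
    and q_basis: "\<forall>f\<in>Vspace n m g d. \<exists>!x. of_coeffs q x = f"
    and blk_range: "\<forall>a. blk a < m"
    and p_in: "\<forall>a. p a \<in> polys_le n (d (blk a))"
    and p_basis: "\<forall>i<m. \<forall>h\<in>polys_le n (d i). \<exists>!c::'l \<Rightarrow> real.
                     (\<forall>a. blk a \<noteq> i \<longrightarrow> c a = 0) \<and> h = (\<Sum>a\<in>UNIV. pconst (c a) * p a)"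
    and LamD: "\<forall>a b. (\<Sum>u\<in>UNIV. pconst (A u $ a $ b) * q u) =
                     (if blk a = blk b then g (blk a) * p a * p b else 0)"
    and proper: "proper_cone (Sigma_vec n m g d q)"
    and one_coeffs: "of_coeffs q one = 1"
    and one_int: "one \<in> interior (Sigma_vec n m g d q)"
begin

abbreviation "Sig \<equiv> Sigma_vec n m g d q"
abbreviation "F c \<equiv> Lam_adj A (outer c c)"

definition hc :: "real^'l \<Rightarrow> nat \<Rightarrow> rpoly" where
  "hc c i = (\<Sum>a\<in>UNIV. pconst (if blk a = i then c$a else 0) * p a)"

lemma inj: "of_coeffs q x = of_coeffs q z \<Longrightarrow> x = z"
  using of_coeffs_inj q_in q_basis by blast

lemma Asym: "A u $ a $ b = A u $ b $ a"
proof -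
  have "of_coeffs q (\<chi> u. A u $ a $ b) = of_coeffs q (\<chi> u. A u $ b $ a)"
    unfolding of_coeffs_def vec_lambda_beta LamD[rule_format] by (auto simp: mult_ac)
  then have "(\<chi> u. A u $ a $ b) = (\<chi> u. A u $ b $ a)" by (rule inj)
  then show ?thesis by (simp add: vec_eq_iff)
qed

lemma Lam_sym: "Lam A x $ a $ b = Lam A x $ b $ a"
  by (simp add: Lam_comp Asym)

lemma Lam_transpose: "transpose (Lam A x) = Lam A x"
  by (simp add: transpose_def vec_eq_iff Lam_sym)

lemma ofc_adj: "of_coeffs q (Lam_adj A S) = (\<Sum>a\<in>UNIV. \<Sum>b\<in>UNIV. pconst (S$a$b) *
     (if blk a = blk b then g (blk a) * p a * p b else 0))"
proof -
  have "of_coeffs q (Lam_adj A S) = (\<Sum>u\<in>UNIV. \<Sum>a\<in>UNIV. \<Sum>b\<in>UNIV. pconst (S$a$b) * (pconst (A u$a$b) * q u))"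
    by (simp add: of_coeffs_def Lam_adj_def pconst_sum pconst_mult sum_distrib_right sum_distrib_left mult_ac)
  also have "\<dots> = (\<Sum>a\<in>UNIV. \<Sum>u\<in>UNIV. \<Sum>b\<in>UNIV. pconst (S$a$b) * (pconst (A u$a$b) * q u))"
    by (rule sum.swap)
  also have "\<dots> = (\<Sum>a\<in>UNIV. \<Sum>b\<in>UNIV. \<Sum>u\<in>UNIV. pconst (S$a$b) * (pconst (A u$a$b) * q u))"
    by (rule sum.cong[OF refl], rule sum.swap)
  also have "\<dots> = (\<Sum>a\<in>UNIV. \<Sum>b\<in>UNIV. pconst (S$a$b) * (\<Sum>u\<in>UNIV. pconst (A u$a$b) * q u))"
    by (simp add: sum_distrib_left)
  also have "\<dots> = (\<Sum>a\<in>UNIV. \<Sum>b\<in>UNIV. pconst (S$a$b) *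
     (if blk a = blk b then g (blk a) * p a * p b else 0))"
    by (simp only: LamD[rule_format])
  finally show ?thesis .
qed

lemma inner_i:
  "(\<Sum>i<m. g i * ((pconst (if blk a = i then ca else 0) * p a) * (pconst (if blk b = i then cb else 0) * p b)))
   = (if blk a = blk b then pconst (ca * cb) * (g (blk a) * p a * p b) else 0)"
proof -
  have "(\<Sum>i<m. g i * ((pconst (if blk a = i then ca else 0) * p a) * (pconst (if blk b = i then cb else 0) * p b)))
     = (\<Sum>i<m. if i = blk a then (if blk a = blk b then pconst (ca * cb) * (g (blk a) * p a * p b) else 0) else 0)"
    by (rule sum.cong) (auto simp: pconst_mult mult_ac)
  also have "\<dots> = (if blk a = blk b then pconst (ca * cb) * (g (blk a) * p a * p b) else 0)"
    using blk_range by simp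
  finally show ?thesis .
qed

lemma hc_outer: "of_coeffs q (F c) = (\<Sum>i<m. g i * (hc c i * hc c i))"
proof -
  have sq: "hc c i * hc c i = (\<Sum>a\<in>UNIV. \<Sum>b\<in>UNIV.
      (pconst (if blk a = i then c$a else 0) * p a) * (pconst (if blk b = i then c$b else 0) * p b))" for i
    unfolding hc_def by (rule sum_product)
  have "(\<Sum>i<m. g i * (hc c i * hc c i)) = (\<Sum>i<m. \<Sum>a\<in>UNIV. \<Sum>b\<in>UNIV.
      g i * ((pconst (if blk a = i then c$a else 0) * p a) * (pconst (if blk b = i then c$b else 0) * p b)))"
    by (simp only: sq sum_distrib_left)
  also have "\<dots> = (\<Sum>a\<in>UNIV. \<Sum>i<m. \<Sum>b\<in>UNIV.
      g i * ((pconst (if blk a = i then c$a else 0) * p a) * (pconst (if blk b = i then c$b else 0) * p b)))"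
    by (rule sum.swap)
  also have "\<dots> = (\<Sum>a\<in>UNIV. \<Sum>b\<in>UNIV. \<Sum>i<m.
      g i * ((pconst (if blk a = i then c$a else 0) * p a) * (pconst (if blk b = i then c$b else 0) * p b)))"
    by (rule sum.cong[OF refl], rule sum.swap)
  also have "\<dots> = (\<Sum>a\<in>UNIV. \<Sum>b\<in>UNIV. (if blk a = blk b then pconst (c$a * c$b) * (g (blk a) * p a * p b) else 0))"
    by (simp only: inner_i)
  also have "\<dots> = of_coeffs q (F c)"
    unfolding ofc_adj outer_def by (intro sum.cong refl) auto
  finally show ?thesis by simp
qed

lemma hc_poly: "i < m \<Longrightarrow> hc c i \<in> polys_le n (d i)"
  unfolding hc_def
proof (rule polys_le_sum)
  fix a assume "i < m"
  show "pconst (if blk a = i then c$a else 0) * p a \<in> polys_le n (d i)"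
  proof (cases "blk a = i")
    case True then show ?thesis using p_in polys_le_scale by metis
  next
    case False then show ?thesis by simp
  qed
qed

lemma F_in_Sig: "F c \<in> Sig"
  unfolding Sigma_vec_def WSOS_def
proof (rule CollectI, rule CollectI, rule exI[of _ "\<lambda>i. hc c i * hc c i"], intro conjI allI impI)
  fix i assume "i < m"
  then show "hc c i * hc c i \<in> sos_le n (d i)"
    unfolding sos_le_def using hc_poly by (intro CollectI exI[of _ "[hc c i]"]) auto
qed (rule hc_outer)

lemma Sig_cc: "convex Sig" "cone Sig" "closed Sig" "Sig \<inter> uminus ` Sig = {0}"
  using proper unfolding proper_cone_def by auto

lemma one_Sig: "one \<in> Sig" using one_int interior_subset by blast

lemma Sig_add: "x \<in> Sig \<Longrightarrow> z \<in> Sig \<Longrightarrow> x + z \<in> Sig"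
  using Sig_cc convex_cone by blast

lemma Sig_0: "0 \<in> Sig"
  using Sig_cc(2) one_Sig unfolding cone_def by (metis order_refl scaleR_zero_left)

lemma Sig_sum: "(\<And>i. i \<in> S \<Longrightarrow> x i \<in> Sig) \<Longrightarrow> (\<Sum>i\<in>S. x i) \<in> Sig"
  by (induction S rule: infinite_finite_induct) (auto simp: Sig_add Sig_0)

lemma inner_F_sum: "x \<bullet> sum_list (map (\<lambda>c. F c) cs) = sum_list (map (\<lambda>c. Lam A x \<bullet> outer c c) cs)"
  by (induction cs) (auto simp: inner_add_right inner_commute[of x] Lam_adj_inner)

lemma hc_single:
  assumes "\<forall>a. blk a \<noteq> i \<longrightarrow> c0 a = 0"
  shows "hc (\<chi> a. c0 a) j = (if j = i then (\<Sum>a\<in>UNIV. pconst (c0 a) * p a) else 0)"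
proof (cases "j = i")
  case True
  have "hc (\<chi> a. c0 a) j = (\<Sum>a\<in>UNIV. pconst (c0 a) * p a)"
    unfolding hc_def using assms True by (intro sum.cong) auto
  then show ?thesis using True by simp
next
  case False
  have "hc (\<chi> a. c0 a) j = 0"
    unfolding hc_def using assms False by (intro sum.neutral) auto
  then show ?thesis using False by simp
qed

lemma F_single:
  assumes "\<forall>a. blk a \<noteq> i \<longrightarrow> c0 a = 0" "i < m"
  shows "of_coeffs q (F (\<chi> a. c0 a)) = g i * ((\<Sum>a\<in>UNIV. pconst (c0 a) * p a) * (\<Sum>a\<in>UNIV. pconst (c0 a) * p a))"
  unfolding hc_outer hc_single[OF assms(1)] using assms(2)
  by (simp add: if_distrib cong: if_cong)

lemma decomp_list:
  assumes "i < m" "set hs \<subseteq> polys_le n (d i)"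
  shows "\<exists>cs. of_coeffs q (sum_list (map (\<lambda>c. F c) cs)) = g i * sum_list (map (\<lambda>h. h * h) hs)"
  using assms(2)
proof (induction hs)
  case Nil
  show ?case by (rule exI[of _ "[]"]) simp
next
  case (Cons h hs)
  then obtain cs where cs: "of_coeffs q (sum_list (map (\<lambda>c. F c) cs)) = g i * sum_list (map (\<lambda>h. h * h) hs)"
    by auto
  have "h \<in> polys_le n (d i)" using Cons.prems by auto
  then obtain c0 where c0: "\<forall>a. blk a \<noteq> i \<longrightarrow> c0 a = 0" "h = (\<Sum>a\<in>UNIV. pconst (c0 a) * p a)"
    using p_basis assms(1) by blast
  have "of_coeffs q (sum_list (map (\<lambda>c. F c) ((\<chi> a. c0 a) # cs))) = g i * sum_list (map (\<lambda>h. h * h) (h # hs))"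
    using F_single[OF c0(1) assms(1)] c0(2) cs by (simp add: of_coeffs_add distrib_left)
  then show ?case by blast
qed

lemma decomp: assumes "s \<in> Sig" shows "\<exists>cs. s = sum_list (map (\<lambda>c. F c) cs)"
proof -
  obtain \<sigma> where \<sigma>: "\<forall>i<m. \<sigma> i \<in> sos_le n (d i)" and eq: "of_coeffs q s = (\<Sum>i<m. g i * \<sigma> i)"
    using assms unfolding Sigma_vec_def WSOS_def by blast
  have each: "\<exists>cs. of_coeffs q (sum_list (map (\<lambda>c. F c) cs)) = g i * \<sigma> i" if im: "i < m" for i
  proof -
    obtain hs where "set hs \<subseteq> polys_le n (d i)" "\<sigma> i = sum_list (map (\<lambda>h. h * h) hs)"
      using \<sigma>[rule_format, OF im] unfolding sos_le_def by auto
    then show ?thesis using decomp_list[OF im] by simp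
  qed
  have "\<exists>cs. of_coeffs q (sum_list (map (\<lambda>c. F c) cs)) = (\<Sum>i<k. g i * \<sigma> i)" if "k \<le> m" for k
    using that
  proof (induction k)
    case 0 show ?case by (rule exI[of _ "[]"]) simp
  next
    case (Suc k)
    then obtain cs where cs: "of_coeffs q (sum_list (map (\<lambda>c. F c) cs)) = (\<Sum>i<k. g i * \<sigma> i)" by auto
    have km: "k < m" using Suc.prems by simp
    obtain cs' where cs': "of_coeffs q (sum_list (map (\<lambda>c. F c) cs')) = g k * \<sigma> k"
      using each[OF km] by blast
    have "of_coeffs q (sum_list (map (\<lambda>c. F c) (cs @ cs'))) = (\<Sum>i<Suc k. g i * \<sigma> i)"
      using cs cs' by (simp add: of_coeffs_add)
    then show ?case by blast
  qed
  then obtain cs where "of_coeffs q (sum_list (map (\<lambda>c. F c) cs)) = of_coeffs q s"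
    using eq by auto
  then show ?thesis using inj by metis
qed

end


context wsetup begin

abbreviation "D \<equiv> dual_cone Sig"

lemma dualD: "z \<in> D \<Longrightarrow> s \<in> Sig \<Longrightarrow> 0 \<le> z \<bullet> s"
  unfolding dual_cone_def by blast

lemma Lam_pd:
  assumes yD: "y \<in> interior D" and c0: "c \<noteq> 0"
  shows "0 < c \<bullet> (Lam A y *v c)"
proof -
  obtain a0 where a0: "c$a0 \<noteq> 0" using c0 by (auto simp: vec_eq_iff)
  define i0 where "i0 = blk a0"
  have i0m: "i0 < m" using blk_range by (simp add: i0_def)
  define ci where "ci i = (\<chi> a. if blk a = i then c$a else 0)" for i
  have hci: "(\<Sum>a\<in>UNIV. pconst (if blk a = i then c$a else 0) * p a) = hc c i" for i
    by (simp add: hc_def)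
  have ofci: "of_coeffs q (F (ci i)) = g i * (hc c i * hc c i)" if "i < m" for i
    using F_single[of i "\<lambda>a. if blk a = i then c$a else 0", OF _ that] unfolding ci_def hci by simp
  have sumF: "F c = (\<Sum>i<m. F (ci i))"
  proof (rule inj)
    show "of_coeffs q (F c) = of_coeffs q (\<Sum>i<m. F (ci i))"
      unfolding of_coeffs_sum hc_outer[of c] by (rule sum.cong[OF refl]) (simp add: ofci)
  qed
  have hne: "hc c i0 \<noteq> 0"
  proof
    assume h0: "hc c i0 = 0"
    let ?P = "\<lambda>c'::'l \<Rightarrow> real. (\<forall>a. blk a \<noteq> i0 \<longrightarrow> c' a = 0) \<and> (0::rpoly) = (\<Sum>a\<in>UNIV. pconst (c' a) * p a)"
    have ex1: "\<exists>!c'. ?P c'" by (rule p_basis[rule_format, OF i0m polys_le_0])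
    have P1: "?P (\<lambda>a. if blk a = i0 then c$a else 0)" using h0 by (simp add: hc_def)
    have P2: "?P (\<lambda>a. 0)" by simp
    have "(\<lambda>a. if blk a = i0 then c$a else 0) = (\<lambda>a. 0)"
      using the1_equality[of "?P", OF ex1 P1] the1_equality[of "?P", OF ex1 P2] by simp
    then have "c$a0 = 0" unfolding i0_def by (metis (mono_tags))
    then show False using a0 by simp
  qed
  have vne: "F (ci i0) \<noteq> 0"
  proof
    assume "F (ci i0) = 0"
    then have "of_coeffs q (F (ci i0)) = 0" by simp
    then show False using ofci[OF i0m] hne g_nz i0m by simp
  qed
  have Fne: "F c \<noteq> 0"
  proof
    assume "F c = 0"
    then have "0 = F (ci i0) + (\<Sum>i\<in>{..<m} - {i0}. F (ci i))"
      using sumF sum.remove[of "{..<m}" i0 "\<lambda>i. F (ci i)"] i0m by simp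
    then have "F (ci i0) = - (\<Sum>i\<in>{..<m} - {i0}. F (ci i))"
      by (simp add: eq_neg_iff_add_eq_0 add.commute)
    moreover have "(\<Sum>i\<in>{..<m} - {i0}. F (ci i)) \<in> Sig" by (rule Sig_sum) (rule F_in_Sig)
    ultimately have "F (ci i0) \<in> Sig \<inter> uminus ` Sig" using F_in_Sig by blast
    then show False using Sig_cc(4) vne by blast
  qed
  obtain e where e: "e > 0" "ball y e \<subseteq> D" using yD mem_interior by blast
  define s where "s = F c"
  have sS: "s \<in> Sig" by (simp add: s_def F_in_Sig)
  have sn: "norm s > 0" using Fne s_def by simp
  define y' where "y' = y - (e / 2 / norm s) *\<^sub>R s"
  have "dist y y' < e" using e sn by (simp add: y'_def dist_norm)
  then have "y' \<in> D" using e by auto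
  then have "0 \<le> y' \<bullet> s" using sS dualD by blast
  also have "y' \<bullet> s = y \<bullet> s - (e / 2 / norm s) * (s \<bullet> s)" by (simp add: y'_def inner_diff_left)
  also have "s \<bullet> s = norm s * norm s" by (simp add: power2_norm_eq_inner[symmetric] power2_eq_square)
  finally have le: "0 \<le> y \<bullet> s - (e / 2 / norm s) * (norm s * norm s)" .
  have "(e / 2 / norm s) * (norm s * norm s) = e / 2 * norm s" using sn by simp
  with le have le2: "e / 2 * norm s \<le> y \<bullet> s" by linarith
  have "0 < e / 2 * norm s" using e sn by simp
  with le2 have "0 < y \<bullet> s" by linarith
  also have "y \<bullet> s = c \<bullet> (Lam A y *v c)"
    by (simp add: s_def inner_commute[of y] Lam_adj_inner inner_outer)
  finally show ?thesis .
qed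

end


context wsetup begin

lemma inner_Sig_zero:
  assumes "Lam A w = 0" "s \<in> Sig"
  shows "w \<bullet> s = 0"
proof -
  obtain cs where "s = sum_list (map (\<lambda>c. F c) cs)" using decomp[OF assms(2)] by blast
  then show ?thesis by (simp add: inner_F_sum assms(1))
qed

lemma Lam0: assumes "Lam A w = 0" shows "w = 0"
proof (rule ccontr)
  assume wn: "w \<noteq> 0"
  obtain e where e: "e > 0" "ball one e \<subseteq> Sig" using one_int mem_interior by blast
  define \<delta> where "\<delta> = e / 2 / norm w"
  have dp: "\<delta> > 0" using e wn by (simp add: \<delta>_def)
  have "dist one (one + \<delta> *\<^sub>R w) < e" using e wn by (simp add: \<delta>_def dist_norm)
  then have "one + \<delta> *\<^sub>R w \<in> Sig" using e by auto
  then have "w \<bullet> (one + \<delta> *\<^sub>R w) = 0" by (rule inner_Sig_zero[OF assms])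
  moreover have "w \<bullet> one = 0" by (rule inner_Sig_zero[OF assms one_Sig])
  ultimately have "\<delta> * (w \<bullet> w) = 0" by (simp add: inner_add_right)
  then show False using dp wn by simp
qed

lemma main:
  assumes yD: "y \<in> interior D" and bd: "t - cstar *\<^sub>R one \<in> frontier Sig"
    and cc: "c < cstar" and gr: "- grad A y = t - c *\<^sub>R one"
  shows "cstar - c \<le> real CARD('l) / dual_norm A y one"
proof -
  define M where "M = Lam A y"
  have Msym: "transpose M = M" by (simp add: M_def Lam_transpose)
  have Msym': "\<forall>a b. M$a$b = M$b$a" using Lam_sym M_def by simp
  have Mpd: "0 < x \<bullet> (M *v x)" if "x \<noteq> 0" for x using Lam_pd[OF yD that] M_def by simp
  have Mpsd: "\<forall>x. 0 \<le> x \<bullet> (M *v x)"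
  proof
    fix x show "0 \<le> x \<bullet> (M *v x)" by (cases "x = 0") (auto intro: less_imp_le[OF Mpd])
  qed
  obtain R :: "real^'l^'l" where R: "transpose R ** R = M" using gram[OF Msym' Mpsd] by blast
  have Rinj: "\<forall>x. R *v x = 0 \<longrightarrow> x = 0"
  proof (intro allI impI, rule ccontr)
    fix x assume R0: "R *v x = 0" and xn: "x \<noteq> 0"
    have "M *v x = transpose R *v (R *v x)" by (simp add: R[symmetric] matrix_vector_mul_assoc)
    then have "M *v x = 0" using R0 by simp
    then show False using Mpd[OF xn] by simp
  qed
  have Rinv: "invertible R" using Rinj matrix_left_invertible_ker invertible_left_inverse by blast
  define S where "S = matrix_inv R"
  have RS: "R ** S = mat 1" "S ** R = mat 1" using matrix_inv_props[OF Rinv] S_def by auto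
  have MM1: "M ** (S ** transpose S) = mat 1"
  proof -
    have "M ** (S ** transpose S) = transpose R ** ((R ** S) ** transpose S)"
      by (simp add: R[symmetric] matrix_mul_assoc)
    also have "\<dots> = transpose R ** transpose S" by (simp add: RS(1))
    also have "\<dots> = transpose (S ** R)" by (simp add: matrix_transpose_mul)
    also have "\<dots> = mat 1" by (simp add: RS(2) transpose_mat)
    finally show ?thesis .
  qed
  have MM2: "(S ** transpose S) ** M = mat 1"
  proof -
    have "(S ** transpose S) ** M = S ** ((transpose S ** transpose R) ** R)"
      by (simp add: R[symmetric] matrix_mul_assoc)
    also have "\<dots> = S ** (transpose (R ** S) ** R)" by (simp add: matrix_transpose_mul)
    also have "\<dots> = mat 1" by (simp add: RS transpose_mat)
    finally show ?thesis .
  qed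
  have Minv: "matrix_inv M = S ** transpose S" by (rule matrix_inv_unique[OF MM1 MM2])
  have MMi: "M ** matrix_inv M = mat 1" using MM1 Minv by simp
  have s0: "t - c *\<^sub>R one = Lam_adj A (matrix_inv M)"
    using gr by (simp add: grad_def M_def)
  have yL: "y \<bullet> (t - c *\<^sub>R one) = real CARD('l)"
  proof -
    have "y \<bullet> (t - c *\<^sub>R one) = M \<bullet> matrix_inv M"
      by (simp add: s0 inner_commute[of y] Lam_adj_inner M_def)
    also have "\<dots> = (\<Sum>b\<in>UNIV. (M ** matrix_inv M)$b$b)" by (rule inner_sym_trace[OF Msym])
    also have "\<dots> = real CARD('l)" by (simp add: MMi mat_def)
    finally show ?thesis .
  qed
  obtain cs1 where one_eq: "one = sum_list (map (\<lambda>c. F c) cs1)" using decomp[OF one_Sig] by blast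
  have inner_one: "x \<bullet> one = sum_list (map (\<lambda>c. Lam A x \<bullet> outer c c) cs1)" for x
    using inner_F_sum one_eq by metis
  define T where "T N = Lam_adj A (matrix_inv M ** N ** matrix_inv M)" for N
  have linT: "linear T" unfolding T_def by (rule T_linear)
  have hess_T: "hess_apply A y w = T (Lam A w)" for w by (simp add: hess_apply_def T_def M_def)
  have hess_lin: "hess_apply A y w = (\<Sum>v\<in>UNIV. w$v *\<^sub>R hess_apply A y (axis v 1))" for w
    unfolding hess_T Lam_axis
    by (simp add: Lam_sum_axis real_vector.linear_sum[OF linT] real_vector.linear_scale[OF linT])
  have hess_mv: "hess A y *v w = hess_apply A y w" for w
    by (subst hess_lin) (simp add: vec_eq_iff matrix_vector_mult_def hess_def sum_component mult.commute)
  have qf: "w \<bullet> hess_apply A y w = (transpose S ** Lam A w ** S) \<bullet> (transpose S ** Lam A w ** S)" for w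
  proof -
    define N where "N = Lam A w"
    define X where "X = transpose S ** N ** S"
    have "w \<bullet> hess_apply A y w = N \<bullet> (matrix_inv M ** N ** matrix_inv M)"
      by (simp add: hess_T T_def inner_commute[of w] Lam_adj_inner N_def)
    also have "matrix_inv M ** N ** matrix_inv M = S ** (X ** transpose S)"
      by (simp add: Minv X_def matrix_mul_assoc)
    also have "N \<bullet> (S ** (X ** transpose S)) = (transpose S ** N) \<bullet> (X ** transpose S)"
      by (rule mat_inner_mul1)
    also have "\<dots> = ((transpose S ** N) ** transpose (transpose S)) \<bullet> X"
      by (rule mat_inner_mul2)
    also have "\<dots> = X \<bullet> X" by (simp add: X_def)
    finally show ?thesis by (simp add: X_def N_def)
  qed
  have backR: "Lam A w = transpose R ** (transpose S ** Lam A w ** S) ** R" for w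
  proof -
    have "transpose R ** (transpose S ** Lam A w ** S) ** R = transpose (S ** R) ** Lam A w ** (S ** R)"
      by (simp add: matrix_transpose_mul matrix_mul_assoc)
    then show ?thesis by (simp add: RS transpose_mat)
  qed
  have Hpd: "0 < w \<bullet> hess_apply A y w" if wn: "w \<noteq> 0" for w
  proof -
    let ?X = "transpose S ** Lam A w ** S"
    have "?X \<noteq> 0"
    proof
      assume "?X = 0"
      then have "Lam A w = 0" using backR[of w] by simp
      then show False using Lam0 wn by blast
    qed
    then show ?thesis unfolding qf by simp
  qed
  have Hinv: "invertible (hess A y)"
  proof -
    have "\<forall>w. hess A y *v w = 0 \<longrightarrow> w = 0"
    proof (intro allI impI, rule ccontr)
      fix w assume "hess A y *v w = 0" "w \<noteq> 0"
      then have "w \<bullet> hess_apply A y w = 0" using hess_mv by simp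
      then show False using Hpd[OF \<open>w \<noteq> 0\<close>] by simp
    qed
    then show ?thesis using matrix_left_invertible_ker invertible_left_inverse by blast
  qed
  define z where "z = matrix_inv (hess A y) *v one"
  have hz: "hess A y *v z = one"
    by (simp add: z_def matrix_vector_mul_assoc matrix_inv_props(1)[OF Hinv])
  have one_ne: "one \<noteq> 0"
  proof
    assume "one = 0"
    then have "of_coeffs q one = 0" by simp
    then show False using one_coeffs by simp
  qed
  have zne: "z \<noteq> 0" using hz one_ne by auto
  define X where "X = transpose S ** Lam A z ** S"
  have oz: "one \<bullet> z = X \<bullet> X"
  proof -
    have "one \<bullet> z = z \<bullet> hess_apply A y z" using hz hess_mv[of z] by (metis inner_commute)
    then show ?thesis using qf[of z] X_def by simp
  qed
  have dn: "dual_norm A y one = norm X"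
    by (simp add: dual_norm_def z_def[symmetric] oz norm_eq_sqrt_inner)
  have Xne: "X \<noteq> 0"
  proof
    assume "X = 0"
    then have "Lam A z = 0" using backR[of z] X_def by simp
    then show False using Lam0 zne by blast
  qed
  have nX: "norm X > 0" using Xne by simp
  have percc: "Lam A z \<bullet> outer c' c' \<le> norm X * (Lam A y \<bullet> outer c' c')" for c'
  proof -
    define v where "v = R *v c'"
    have cv: "c' = S *v v" by (simp add: v_def matrix_vector_mul_assoc RS(2))
    have "Lam A z \<bullet> outer c' c' = c' \<bullet> (Lam A z *v c')" by (rule inner_outer)
    also have "\<dots> = v \<bullet> (transpose S *v (Lam A z *v (S *v v)))"
      by (simp only: inner_transpose_mv cv)
    also have "\<dots> = v \<bullet> (X *v v)" by (simp add: X_def matrix_vector_mul_assoc matrix_mul_assoc)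
    also have "\<dots> = X \<bullet> outer v v" by (rule inner_outer[symmetric])
    also have "\<dots> \<le> norm X * norm (outer v v)" by (rule norm_cauchy_schwarz)
    also have "norm (outer v v) = v \<bullet> v" by (rule norm_outer)
    also have "v \<bullet> v = Lam A y \<bullet> outer c' c'"
    proof -
      have "Lam A y \<bullet> outer c' c' = c' \<bullet> (transpose R *v (R *v c'))"
        by (simp add: inner_outer M_def[symmetric] R[symmetric] matrix_vector_mul_assoc)
      also have "\<dots> = v \<bullet> v" by (simp only: inner_transpose_mv v_def)
      finally show ?thesis by simp
    qed
    finally show ?thesis .
  qed
  have "X \<bullet> X = z \<bullet> one" using oz by (simp add: inner_commute)
  also have "\<dots> = sum_list (map (\<lambda>c. Lam A z \<bullet> outer c c) cs1)" by (rule inner_one)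
  also have "\<dots> \<le> sum_list (map (\<lambda>c. norm X * (Lam A y \<bullet> outer c c)) cs1)"
    by (rule sum_list_mono) (rule percc)
  also have "\<dots> = norm X * (y \<bullet> one)" by (simp add: inner_one sum_list_const_mult)
  finally have "norm X * norm X \<le> norm X * (y \<bullet> one)" by (simp add: norm_eq_sqrt_inner)
  then have Xy: "norm X \<le> y \<bullet> one" using nX by simp
  have tS: "t - cstar *\<^sub>R one \<in> Sig" using bd frontier_subset_closed[OF Sig_cc(3)] by blast
  have yDD: "y \<in> D" using yD interior_subset by blast
  have "0 \<le> y \<bullet> (t - cstar *\<^sub>R one)" by (rule dualD[OF yDD tS])
  also have "t - cstar *\<^sub>R one = (t - c *\<^sub>R one) - (cstar - c) *\<^sub>R one" by (simp add: algebra_simps)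
  also have "y \<bullet> \<dots> = real CARD('l) - (cstar - c) * (y \<bullet> one)" using yL by (simp add: inner_diff_right)
  finally have k1: "(cstar - c) * (y \<bullet> one) \<le> real CARD('l)" by simp
  have "(cstar - c) * norm X \<le> (cstar - c) * (y \<bullet> one)" using Xy cc by (simp add: mult_left_mono)
  with k1 have "(cstar - c) * norm X \<le> real CARD('l)" by linarith
  then show ?thesis using nX dn by (simp add: pos_le_divide_eq)
qed

end

theorem theorem2:
  fixes n m :: nat and g :: "nat \<Rightarrow> rpoly" and d :: "nat \<Rightarrow> nat"
    and q :: "'u::finite \<Rightarrow> rpoly"
    and blk :: "'l::finite \<Rightarrow> nat" and p :: "'l \<Rightarrow> rpoly"
    and A :: "'u \<Rightarrow> real^'l^'l"
    and one :: "real^'u"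
  assumes g_nz: "\<forall>i<m. g i \<noteq> 0 \<and> in_vars n (g i)"
    and q_in: "\<forall>u. q u \<in> Vspace n m g d"
    and q_basis: "\<forall>f\<in>Vspace n m g d. \<exists>!x. of_coeffs q x = f"
    and blk_range: "\<forall>a. blk a < m"
    and p_in: "\<forall>a. p a \<in> polys_le n (d (blk a))"
    and p_basis: "\<forall>i<m. \<forall>h\<in>polys_le n (d i). \<exists>!c::'l \<Rightarrow> real.
                     (\<forall>a. blk a \<noteq> i \<longrightarrow> c a = 0) \<and> h = (\<Sum>a\<in>UNIV. pconst (c a) * p a)"
    and Lam_def: "\<forall>a b. (\<Sum>u\<in>UNIV. pconst (A u $ a $ b) * q u) =
                     (if blk a = blk b then g (blk a) * p a * p b else 0)"
    and proper: "proper_cone (Sigma_vec n m g d q)"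
    and one_coeffs: "of_coeffs q one = 1"
    and one_int: "one \<in> interior (Sigma_vec n m g d q)"
  shows "\<exists>C>0. \<forall>(t::real^'u) (cstar::real) (c::real) (y::real^'u).
           t - cstar *\<^sub>R one \<in> frontier (Sigma_vec n m g d q) \<longrightarrow> c < cstar \<longrightarrow>
           y \<in> interior (dual_cone (Sigma_vec n m g d q)) \<longrightarrow>
           - grad A y = t - c *\<^sub>R one \<longrightarrow>
           cstar - c \<le> 1 / (C * dual_norm A y one)"
proof -
  have W: "wsetup n m g d q blk p A one"
    unfolding wsetup_def using g_nz q_in q_basis blk_range p_in p_basis Lam_def proper one_coeffs one_int
    by blast
  show ?thesis
  proof (rule exI[of _ "1 / real CARD('l)"], intro conjI allI impI)
    show "0 < 1 / real CARD('l)" by simp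
  next
    fix t :: "real^'u" and cstar c :: real and y :: "real^'u"
    assume bd: "t - cstar *\<^sub>R one \<in> frontier (Sigma_vec n m g d q)" and cc: "c < cstar"
      and yD: "y \<in> interior (dual_cone (Sigma_vec n m g d q))"
      and gr: "- grad A y = t - c *\<^sub>R one"
    have "cstar - c \<le> real CARD('l) / dual_norm A y one"
      by (rule wsetup.main[OF W yD bd cc gr])
    then show "cstar - c \<le> 1 / (1 / real CARD('l) * dual_norm A y one)" by simp
  qed
qed

end
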